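(* Let $(M,h)$ be a Riemannian manifold, $p\in C^\infty(M)$, $\omega^\sharp$ the $h$-gradient of $p$, $\bar g>0$, and $\mathbf{G}^T=-\bar g\,\omega^\sharp$. Fix $x\in M$ and $\tilde\eta\in(0,1]$, put $b=\|\omega^\sharp\|_h(x)$, and assume $\tilde\eta\|\mathbf{G}^T\|_h(x)<1$ (i.e. $\tilde\eta\bar g b<1$). Let $\phi(s)=\frac{1}{1+\tilde\eta\bar g s}$ for $|s|\le b$. Then the following are equivalent: (i) $\phi(s)-s\phi'(s)+(b^2-s^2)\phi''(s)>0$ for all $s$ with $|s|\le b$; (ii) $|s|\le b<b_0$ for all such $s$, where $b_0=\frac{1}{2\tilde\eta\bar g}$; (iii) $\|\mathbf{G}^T\|_h(x)<\frac{1}{2\tilde\eta}$.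
   Context: Here $s$ plays the role of $\beta/\alpha$ with $\alpha=\sqrt{h(y,y)}$, $\beta=h(y,\omega^\sharp)$, $y\in T_xM\setminus\{0\}$, so that $|s|\le b$ by Cauchy–Schwarz; note $\|\mathbf{G}^T\|_h=\bar g\,b$. *)

theory Defs
  imports "HOL-Analysis.Analysis"
begin

end

theory Submission
  imports Defs
begin

lemma phi_d1:
  fixes k s :: real
  assumes "1 + k * s \<noteq> 0"
  shows "((\<lambda>s. 1 / (1 + k * s)) has_real_derivative (- k / (1 + k * s)^2)) (at s)"
  using assms
  by (auto intro!: derivative_eq_intros simp: power2_eq_square field_simps)

lemma e_aux: fixes u k :: real assumes u: "u \<noteq> 0" shows "- (- k * (2 * u * k)) / (u^2)^2 = 2 * k^2 / u^3"
    using u by (simp add: power2_eq_square power3_eq_cube field_simps)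

lemma phi_d2:
  fixes k s :: real
  assumes "1 + k * s \<noteq> 0"
  shows "((\<lambda>s. - k / (1 + k * s)^2) has_real_derivative (2 * k^2 / (1 + k * s)^3)) (at s)"
proof -
  have "((\<lambda>s. - k / (1 + k * s)^2) has_real_derivative (- (- k * (2 * (1 + k * s) * k)) / ((1 + k * s)^2)^2)) (at s)"
    using assms by (auto intro!: derivative_eq_intros)
  then show ?thesis using e_aux[OF assms] by simp
qed

lemma E_aux:
  fixes u k s b :: real
  assumes "u = 1 + k * s" "u \<noteq> 0"
  shows "1 / u - s * (- k / u^2) + (b\<^sup>2 - s\<^sup>2) * (2 * k^2 / u^3)
      = (1 + 3 * (k * s) + 2 * (k * b)^2) / u^3"
proof -
  have "1 / u - s * (- k / u^2) + (b\<^sup>2 - s\<^sup>2) * (2 * k^2 / u^3)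
      = (u^2 + s * k * u + (b\<^sup>2 - s\<^sup>2) * (2 * k^2)) / u^3"
    using assms(2) by (simp add: divide_simps power2_eq_square power3_eq_cube) (simp add: algebra_simps)
  also have "u^2 + s * k * u + (b\<^sup>2 - s\<^sup>2) * (2 * k^2) = 1 + 3 * (k * s) + 2 * (k * b)^2"
    unfolding assms(1) by (simp add: algebra_simps power2_eq_square)
  finally show ?thesis .
qed

lemma phi_derivs:
  fixes k s :: real
  assumes "1 + k * s \<noteq> 0"
  shows "deriv (\<lambda>s. 1 / (1 + k * s)) s = - k / (1 + k * s)^2"
    and "deriv (deriv (\<lambda>s. 1 / (1 + k * s))) s = 2 * k^2 / (1 + k * s)^3"
proof -
  show "deriv (\<lambda>s. 1 / (1 + k * s)) s = - k / (1 + k * s)^2"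
    using phi_d1[OF assms] by (rule DERIV_imp_deriv)
  have o: "open {s::real. 1 + k * s \<noteq> 0}"
    by (intro open_Collect_neq continuous_intros)
  have eqS: "- k / (1 + k * x)^2 = deriv (\<lambda>s. 1 / (1 + k * s)) x" if "x \<in> {s::real. 1 + k * s \<noteq> 0}" for x
  proof -
    have "1 + k * x \<noteq> 0" using that by simp
    from DERIV_imp_deriv[OF phi_d1[OF this]] show ?thesis by simp
  qed
  have sS: "s \<in> {s::real. 1 + k * s \<noteq> 0}" using assms by simp
  have "(deriv (\<lambda>s. 1 / (1 + k * s)) has_real_derivative (2 * k^2 / (1 + k * s)^3)) (at s)"
    using has_field_derivative_transform_within_open[OF phi_d2[OF assms] o sS eqS] .
  then show "deriv (deriv (\<lambda>s. 1 / (1 + k * s))) s = 2 * k^2 / (1 + k * s)^3"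
    by (rule DERIV_imp_deriv)
qed

lemma key:
  fixes k b :: real
  assumes "k > 0" "b \<ge> 0" "k * b < 1"
  shows "(\<forall>s. \<bar>s\<bar> \<le> b \<longrightarrow>
            1 / (1 + k * s) - s * (- k / (1 + k * s)^2) + (b\<^sup>2 - s\<^sup>2) * (2 * k^2 / (1 + k * s)^3) > 0)
        \<longleftrightarrow> k * b < 1/2"
proof -
  have E: "1 / (1 + k * s) - s * (- k / (1 + k * s)^2) + (b\<^sup>2 - s\<^sup>2) * (2 * k^2 / (1 + k * s)^3)
      = (1 + 3 * (k * s) + 2 * (k * b)^2) / (1 + k * s)^3" if "1 + k * s > 0" for s
    using that by (intro E_aux) auto
  have pos: "1 + k * s > 0" if "\<bar>s\<bar> \<le> b" for s
  proof -
    have "k * (- s) \<le> k * b" using that assms(1) by (intro mult_left_mono) auto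
    hence "k * s \<ge> - (k * b)" by simp
    then show ?thesis using assms by linarith
  qed
  show ?thesis
  proof
    assume H: "\<forall>s. \<bar>s\<bar> \<le> b \<longrightarrow> 1 / (1 + k * s) - s * (- k / (1 + k * s)^2) + (b\<^sup>2 - s\<^sup>2) * (2 * k^2 / (1 + k * s)^3) > 0"
    have mb: "\<bar>-b\<bar> \<le> b" using assms by simp
    have p: "1 + k * (-b) > 0" by (rule pos[OF mb])
    from H mb have "1 / (1 + k * (-b)) - (-b) * (- k / (1 + k * (-b))^2) + (b\<^sup>2 - (-b)\<^sup>2) * (2 * k^2 / (1 + k * (-b))^3) > 0"
      by blast
    hence "(1 + 3 * (k * (-b)) + 2 * (k * b)^2) / (1 + k * (-b))^3 > 0" unfolding E[OF p] .
    moreover have "(1 + k * (-b))^3 > 0" using p by simp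
    ultimately have q: "1 + 3 * (k * (-b)) + 2 * (k * b)^2 > 0"
      by (simp add: zero_less_divide_iff)
    have "(1 - k * b) * (1 - 2*(k * b)) = 1 + 3 * (k * (-b)) + 2 * (k * b)^2"
      by (simp add: algebra_simps power2_eq_square)
    with q have "(1 - k * b) * (1 - 2*(k * b)) > 0" by simp
    moreover have "1 - k * b > 0" using assms by simp
    ultimately have "1 - 2*(k * b) > 0" by (rule zero_less_mult_pos)
    then show "k * b < 1/2" by linarith
  next
    assume h: "k * b < 1/2"
    show "\<forall>s. \<bar>s\<bar> \<le> b \<longrightarrow> 1 / (1 + k * s) - s * (- k / (1 + k * s)^2) + (b\<^sup>2 - s\<^sup>2) * (2 * k^2 / (1 + k * s)^3) > 0"
    proof (intro allI impI)
      fix s assume s: "\<bar>s\<bar> \<le> b"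
      have "k * (- s) \<le> k * b" using s assms(1) by (intro mult_left_mono) auto
      hence ks: "k * s \<ge> - (k * b)" by simp
      have "(1 - k * b) * (1 - 2*(k * b)) > 0" using h assms by simp
      moreover have "(1 - k * b) * (1 - 2*(k * b)) = 1 - 3 * (k * b) + 2 * (k * b)^2"
        by (simp add: algebra_simps power2_eq_square)
      ultimately have "1 + 3 * (k * s) + 2 * (k * b)^2 > 0" using ks by linarith
      moreover have "(1 + k * s)^3 > 0" using pos[OF s] by simp
      ultimately show "1 / (1 + k * s) - s * (- k / (1 + k * s)^2) + (b\<^sup>2 - s\<^sup>2) * (2 * k^2 / (1 + k * s)^3) > 0"
        unfolding E[OF pos[OF s]] by simp
    qed
  qed
qed

theorem lemma3p1:
  fixes w :: "'a::real_inner" and gbar eta :: real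
  assumes gpos: "gbar > 0"
    and eta: "0 < eta" "eta \<le> 1"
    and small: "eta * norm (- gbar *\<^sub>R w) < 1"
  defines "b \<equiv> norm w"
    and "GTx \<equiv> - gbar *\<^sub>R w"
    and "\<phi> \<equiv> (\<lambda>s::real. 1 / (1 + eta * gbar * s))"
  shows "((\<forall>s. \<bar>s\<bar> \<le> b \<longrightarrow>
            \<phi> s - s * deriv \<phi> s + (b\<^sup>2 - s\<^sup>2) * deriv (deriv \<phi>) s > 0)
          \<longleftrightarrow> (\<forall>s. \<bar>s\<bar> \<le> b \<longrightarrow> \<bar>s\<bar> \<le> b \<and> b < 1 / (2 * eta * gbar)))
       \<and> ((\<forall>s. \<bar>s\<bar> \<le> b \<longrightarrow> \<bar>s\<bar> \<le> b \<and> b < 1 / (2 * eta * gbar))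
          \<longleftrightarrow> norm GTx < 1 / (2 * eta))"
proof -
  define k where "k = eta * gbar"
  have k: "k > 0" using gpos eta k_def by simp
  have b0: "b \<ge> 0" using b_def by simp
  have kb: "k * b < 1" using small by (simp add: k_def b_def mult.assoc gpos abs_of_pos)
  have pos: "1 + k * s \<noteq> 0" if "\<bar>s\<bar> \<le> b" for s
  proof -
    have "k * (- s) \<le> k * b" using that k by (intro mult_left_mono) auto
    hence "k * s \<ge> - (k * b)" by simp
    then show ?thesis using kb by linarith
  qed
  have phi: "\<phi> = (\<lambda>s. 1 / (1 + k * s))" by (simp add: \<phi>_def k_def)
  have eq: "\<phi> s - s * deriv \<phi> s + (b\<^sup>2 - s\<^sup>2) * deriv (deriv \<phi>) s
      = 1 / (1 + k * s) - s * (- k / (1 + k * s)^2) + (b\<^sup>2 - s\<^sup>2) * (2 * k^2 / (1 + k * s)^3)"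
    if "\<bar>s\<bar> \<le> b" for s
    using phi_derivs[OF pos[OF that]] unfolding phi by simp
  have A: "(\<forall>s. \<bar>s\<bar> \<le> b \<longrightarrow> \<phi> s - s * deriv \<phi> s + (b\<^sup>2 - s\<^sup>2) * deriv (deriv \<phi>) s > 0)
      \<longleftrightarrow> k * b < 1/2"
  proof -
    have "(\<forall>s. \<bar>s\<bar> \<le> b \<longrightarrow> \<phi> s - s * deriv \<phi> s + (b\<^sup>2 - s\<^sup>2) * deriv (deriv \<phi>) s > 0)
      \<longleftrightarrow> (\<forall>s. \<bar>s\<bar> \<le> b \<longrightarrow> 1 / (1 + k * s) - s * (- k / (1 + k * s)^2) + (b\<^sup>2 - s\<^sup>2) * (2 * k^2 / (1 + k * s)^3) > 0)"
    proof (intro iffI allI impI)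
      fix s assume H: "\<forall>s. \<bar>s\<bar> \<le> b \<longrightarrow> \<phi> s - s * deriv \<phi> s + (b\<^sup>2 - s\<^sup>2) * deriv (deriv \<phi>) s > 0"
        and s: "\<bar>s\<bar> \<le> b"
      from H s have "\<phi> s - s * deriv \<phi> s + (b\<^sup>2 - s\<^sup>2) * deriv (deriv \<phi>) s > 0" by blast
      then show "1 / (1 + k * s) - s * (- k / (1 + k * s)^2) + (b\<^sup>2 - s\<^sup>2) * (2 * k^2 / (1 + k * s)^3) > 0"
        unfolding eq[OF s] .
    next
      fix s assume H: "\<forall>s. \<bar>s\<bar> \<le> b \<longrightarrow> 1 / (1 + k * s) - s * (- k / (1 + k * s)^2) + (b\<^sup>2 - s\<^sup>2) * (2 * k^2 / (1 + k * s)^3) > 0"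
        and s: "\<bar>s\<bar> \<le> b"
      from H s have "1 / (1 + k * s) - s * (- k / (1 + k * s)^2) + (b\<^sup>2 - s\<^sup>2) * (2 * k^2 / (1 + k * s)^3) > 0" by blast
      then show "\<phi> s - s * deriv \<phi> s + (b\<^sup>2 - s\<^sup>2) * deriv (deriv \<phi>) s > 0"
        unfolding eq[OF s] .
    qed
    also have "\<dots> \<longleftrightarrow> k * b < 1/2" by (rule key[OF k b0 kb])
    finally show ?thesis .
  qed
  have B: "(\<forall>s. \<bar>s\<bar> \<le> b \<longrightarrow> \<bar>s\<bar> \<le> b \<and> b < 1 / (2 * eta * gbar)) \<longleftrightarrow> k * b < 1/2"
  proof -
    have "(\<forall>s. \<bar>s\<bar> \<le> b \<longrightarrow> \<bar>s\<bar> \<le> b \<and> b < 1 / (2 * eta * gbar)) \<longleftrightarrow> b < 1 / (2 * k)"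
    proof
      assume "\<forall>s. \<bar>s\<bar> \<le> b \<longrightarrow> \<bar>s\<bar> \<le> b \<and> b < 1 / (2 * eta * gbar)"
      hence "b < 1 / (2 * eta * gbar)" using b0 by (metis abs_zero)
      thus "b < 1 / (2 * k)" by (simp add: k_def mult.assoc)
    next
      assume "b < 1 / (2 * k)"
      thus "\<forall>s. \<bar>s\<bar> \<le> b \<longrightarrow> \<bar>s\<bar> \<le> b \<and> b < 1 / (2 * eta * gbar)"
        by (simp add: k_def mult.assoc)
    qed
    also have "\<dots> \<longleftrightarrow> b * (2 * k) < 1" using k by (simp add: pos_less_divide_eq)
    also have "\<dots> \<longleftrightarrow> k * b < 1/2" by (simp add: algebra_simps)
    finally show ?thesis .
  qed
  have C: "norm GTx < 1 / (2 * eta) \<longleftrightarrow> k * b < 1/2"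
  proof -
    have n: "norm GTx = gbar * b" using gpos by (simp add: GTx_def b_def)
    have "gbar * b < 1 / (2 * eta) \<longleftrightarrow> gbar * b * (2 * eta) < 1"
      using eta by (simp add: pos_less_divide_eq)
    also have "\<dots> \<longleftrightarrow> k * b < 1/2" by (simp add: k_def algebra_simps)
    finally show ?thesis using n by simp
  qed
  show ?thesis using A B C by blast
qed

end
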